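(* Let $b>0$, $B=B(0,b)\subset\mathbb R^3$ the open ball of radius $b$ centred at $0$, and $M=\mathbb R^3\setminus B$. For $u\in C^1_c(M)$ and $\alpha\ge1$ define on $B$, in spherical coordinates, $u_\alpha(r,\theta,\phi)=u(r^{-\alpha}b^{\alpha+1},\theta,\phi)$. Then $$\|\nabla u_\alpha\|^2_{L^2(B)}\le\alpha\,\|\nabla u\|^2_{L^2(M)}.$$
   Context: Norms and gradients are those of the Euclidean metric on $\mathbb R^3$. *)

theory Defs
  imports "HOL-Analysis.Analysis"
begin

definition grad :: "(real^3 \<Rightarrow> real) \<Rightarrow> real^3 \<Rightarrow> real^3" where
  "grad f x = (THE D. GDERIV f x :> D)"

text \<open>The transformed function u_alpha on B: in spherical coordinates
  u_alpha(r,theta,phi) = u(r^(-alpha) b^(alpha+1), theta, phi), i.e. the point x with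
  |x| = r is sent to the point with radius r^(-alpha) b^(alpha+1) in the same direction,
  namely (b/|x|)^(alpha+1) x.  (At x = 0 the value is irrelevant, a null set.)\<close>
definition u_alpha :: "real \<Rightarrow> real \<Rightarrow> (real^3 \<Rightarrow> real) \<Rightarrow> real^3 \<Rightarrow> real" where
  "u_alpha b \<alpha> u x = u ((b / norm x) powr (\<alpha> + 1) *\<^sub>R x)"

end

theory Submission
  imports Defs
begin

lemma grad_eq: assumes "GDERIV f x :> D" shows "grad f x = D"
proof -
  have u: "D' = D" if "GDERIV f x :> D'" for D'
  proof -
    have "(\<lambda>h. inner h D') = (\<lambda>h. inner h D)"
      using that assms unfolding gderiv_def by (rule has_derivative_unique)
    then have "inner (D' - D) D' = inner (D' - D) D" by metis
    then have "inner (D' - D) (D' - D) = 0" by (simp add: inner_diff_right)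
    then show ?thesis by simp
  qed
  show ?thesis unfolding grad_def using assms u by (rule the_equality)
qed
lemma diff_gderiv: fixes f :: "real^3 \<Rightarrow> real" assumes "f differentiable (at x)"
  shows "GDERIV f x :> grad f x"
proof -
  obtain D where D: "(f has_derivative D) (at x)" using assms differentiable_def by blast
  have lin: "linear D" using D has_derivative_linear by blast
  define G where "G = (\<chi> i. D (axis i 1))"
  have "D h = inner h G" for h::"real^3"
  proof -
    have e: "(\<Sum>i\<in>UNIV. h$i *\<^sub>R axis i (1::real)) = h"
      using basis_expansion[of h] by (simp add: scalar_mult_eq_scaleR)
    have "D h = D (\<Sum>i\<in>UNIV. h$i *\<^sub>R axis i 1)"
      by (simp only: e)
    also have "\<dots> = (\<Sum>i\<in>UNIV. h$i * D (axis i 1))"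
      using lin by (simp add: linear_sum linear_scale)
    also have "\<dots> = inner h G" by (simp add: G_def inner_vec_def)
    finally show ?thesis .
  qed
  then have "GDERIV f x :> G" using D unfolding gderiv_def by (metis (no_types) ext)
  then show ?thesis using grad_eq by metis
qed

lemma c_deriv: fixes x :: "real^3" assumes "x \<noteq> 0" "b > 0"
  shows "((\<lambda>y. (b / norm y) powr \<beta>) has_derivative
     (\<lambda>h. - (\<beta> * (b / norm x) powr \<beta> / (norm x)^2 * inner x h))) (at x)"
  apply (rule has_derivative_eq_rhs)
   apply (rule derivative_eq_intros has_derivative_norm[OF assms(1)] has_derivative_const refl | simp add: assms)+
  apply (rule ext)
  apply (simp add: sgn_div_norm inner_commute field_simps power2_eq_square assms)
  done

lemma T_deriv: fixes x :: "real^3" assumes "x \<noteq> 0" "b > 0"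
  shows "((\<lambda>y. (b / norm y) powr \<beta> *\<^sub>R y) has_derivative
     (\<lambda>h. (b / norm x) powr \<beta> *\<^sub>R h - (\<beta> * (b / norm x) powr \<beta> / (norm x)^2 * inner x h) *\<^sub>R x)) (at x)"
  apply (rule has_derivative_eq_rhs[OF has_derivative_scaleR[OF c_deriv[OF assms] has_derivative_ident]])
  apply (rule ext)
  apply (simp add: algebra_simps)
  done

lemma det_T: fixes x :: "real^3"
  shows "det (matrix (\<lambda>h. c *\<^sub>R h - (k * inner x h) *\<^sub>R x)) = c^3 - c^2 * k * (norm x)^2"
proof -
  have n: "(norm x)^2 = x$1 * x$1 + x$2 * x$2 + x$3 * x$3"
    by (simp add: power2_norm_eq_inner inner_vec_def sum_3)
  show ?thesis
    unfolding n
    by (simp add: det_3 matrix_def axis_def inner_vec_def sum_3 algebra_simps power2_eq_square power3_eq_cube)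
qed

lemma grad_comp: fixes x g :: "real^3" and u :: "real^3 \<Rightarrow> real"
  assumes "GDERIV u (T x) :> g" "(T has_derivative (\<lambda>h. c *\<^sub>R h - (k * inner x h) *\<^sub>R x)) (at x)"
  shows "GDERIV (\<lambda>y. u (T y)) x :> (c *\<^sub>R g - (k * inner x g) *\<^sub>R x)"
  unfolding gderiv_def
  apply (rule has_derivative_eq_rhs[OF has_derivative_compose[OF assms(2) assms(1)[unfolded gderiv_def]]])
  apply (rule ext)
  apply (simp add: inner_diff_left inner_diff_right inner_commute algebra_simps)
  done

lemma norm_bound: fixes x g :: "real^3" assumes "x \<noteq> 0" "\<alpha> \<ge> 1" 
  shows "(norm (c *\<^sub>R g - ((\<alpha>+1)*c/(norm x)^2 * inner x g) *\<^sub>R x))^2 \<le> \<alpha>^2 * c^2 * (norm g)^2"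
proof -
  define n where "n = norm x"
  define p where "p = inner x g"
  have n0: "n > 0" using assms n_def by simp
  have cs: "p^2 \<le> n^2 * (norm g)^2"
  proof -
    have "\<bar>p\<bar> \<le> n * norm g" unfolding p_def n_def by (rule Cauchy_Schwarz_ineq2)
    then have "\<bar>p\<bar>^2 \<le> (n * norm g)^2" by (rule power_mono) simp
    then show ?thesis by (simp add: power_mult_distrib)
  qed
  have xx: "inner x x = n^2" by (simp add: n_def power2_norm_eq_inner)
  have ex: "(norm (a1 *\<^sub>R g - s1 *\<^sub>R x))^2 = a1^2*(norm g)^2 - 2 * a1 * s1 * p + s1^2*n^2" for a1 s1
  proof -
    have "(norm (a1 *\<^sub>R g - s1 *\<^sub>R x))^2 = inner (a1 *\<^sub>R g - s1 *\<^sub>R x) (a1 *\<^sub>R g - s1 *\<^sub>R x)"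
      by (simp only: power2_norm_eq_inner)
    also have "\<dots> = a1^2 * inner g g - 2 * a1 * s1 * inner x g + s1^2 * inner x x"
      by (simp add: inner_diff_left inner_diff_right inner_commute algebra_simps power2_eq_square)
    also have "\<dots> = a1^2*(norm g)^2 - 2 * a1 * s1 * p + s1^2*n^2"
      by (simp only: power2_norm_eq_inner p_def n_def)
    finally show ?thesis .
  qed
  have "(norm (c *\<^sub>R g - ((\<alpha>+1)*c/n^2 * p) *\<^sub>R x))^2
      = c^2 * (norm g)^2 - 2 * c * ((\<alpha>+1)*c/n^2 * p) * p + ((\<alpha>+1)*c/n^2 * p)^2 * n^2"
    by (simp only: ex)
  also have "\<dots> = c^2 * (norm g)^2 + (\<alpha>^2 - 1) * c^2 * (p^2 / n^2)"
    using n0 by (simp add: field_simps power2_eq_square)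
  also have "\<dots> \<le> c^2 * (norm g)^2 + (\<alpha>^2 - 1) * c^2 * (norm g)^2"
  proof -
    have A: "p^2 / n^2 \<le> (norm g)^2" using cs n0 by (simp add: divide_le_eq mult.commute)
    have B: "(\<alpha>^2 - 1) * c^2 \<ge> 0" using assms by (simp add: one_le_power)
    have "(\<alpha>^2 - 1) * c^2 * (p^2 / n^2) \<le> (\<alpha>^2 - 1) * c^2 * (norm g)^2"
      by (rule mult_left_mono[OF A B])
    then show ?thesis by linarith
  qed
  also have "\<dots> = \<alpha>^2 * c^2 * (norm g)^2" by (simp add: algebra_simps)
  finally show ?thesis unfolding n_def p_def .
qed

theorem lemma5p1:
  fixes b \<alpha> :: real and u :: "real^3 \<Rightarrow> real"
  assumes "b > 0" and "\<alpha> \<ge> 1"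
    and "\<forall>x. u differentiable (at x)"
    and "continuous_on UNIV (grad u)"
    and "compact (closure {x. u x \<noteq> 0})"
  shows "(\<integral>\<^sup>+ x \<in> ball 0 b. ennreal ((norm (grad (u_alpha b \<alpha> u) x))\<^sup>2) \<partial>lborel)
         \<le> ennreal \<alpha> * (\<integral>\<^sup>+ x \<in> - ball 0 b. ennreal ((norm (grad u x))\<^sup>2) \<partial>lborel)"
proof -
  define \<beta> where "\<beta> = \<alpha> + 1"
  define T where "T = (\<lambda>y::real^3. (b / norm y) powr \<beta> *\<^sub>R y)"
  define cc where "cc = (\<lambda>x::real^3. (b / norm x) powr \<beta>)"
  define T' where "T' = (\<lambda>x::real^3. \<lambda>h. cc x *\<^sub>R h - (\<beta> * cc x / (norm x)^2 * inner x h) *\<^sub>R x)"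
  define S where "S = ball (0::real^3) b - {0}"
  define f where "f = (\<lambda>y. (norm (grad u y))^2)"
  define H where "H = (\<lambda>x. \<bar>det (matrix (T' x))\<bar> * f (T x))"
  have ua: "u_alpha b \<alpha> u = (\<lambda>y. u (T y))" by (simp add: u_alpha_def T_def \<beta>_def fun_eq_iff)
  have Tder: "(T has_derivative T' x) (at x)" if "x \<noteq> 0" for x
    unfolding T_def T'_def cc_def using T_deriv[OF that assms(1)] by simp
  have cc_ge1: "cc x \<ge> 1" if "x \<in> S" for x
  proof -
    have "norm x < b" "x \<noteq> 0" using that by (auto simp: S_def)
    then have "b / norm x \<ge> 1" by simp
    then show ?thesis unfolding cc_def \<beta>_def using assms(2) by (intro ge_one_powr_ge_zero) auto
  qed
  have detT: "\<bar>det (matrix (T' x))\<bar> = \<alpha> * cc x ^ 3" if "x \<in> S" for x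
  proof -
    have x0: "x \<noteq> 0" using that by (auto simp: S_def)
    have "det (matrix (T' x)) = cc x ^3 - cc x ^2 * (\<beta> * cc x / (norm x)^2) * (norm x)^2"
      unfolding T'_def by (rule det_T)
    also have "\<dots> = - (\<alpha> * cc x ^ 3)" using x0 by (simp add: \<beta>_def field_simps power2_eq_square power3_eq_cube)
    finally show ?thesis using cc_ge1[OF that] assms(2) by simp
  qed
  have pw: "(norm (grad (u_alpha b \<alpha> u) x))^2 \<le> \<alpha> * H x" if "x \<in> S" for x
  proof -
    have x0: "x \<noteq> 0" using that by (auto simp: S_def)
    define g where "g = grad u (T x)"
    have gd: "GDERIV u (T x) :> g" unfolding g_def using assms(3) diff_gderiv by blast
    have "GDERIV (\<lambda>y. u (T y)) x :> (cc x *\<^sub>R g - (\<beta> * cc x / (norm x)^2 * inner x g) *\<^sub>R x)"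
      by (rule grad_comp[of u T x g, OF gd]) (use Tder[OF x0] in \<open>simp add: T'_def\<close>)
    then have G: "grad (u_alpha b \<alpha> u) x = cc x *\<^sub>R g - (\<beta> * cc x / (norm x)^2 * inner x g) *\<^sub>R x"
      unfolding ua by (rule grad_eq)
    have "(norm (grad (u_alpha b \<alpha> u) x))^2 \<le> \<alpha>^2 * cc x^2 * (norm g)^2"
      unfolding G \<beta>_def by (rule norm_bound[OF x0 assms(2)])
    also have "\<dots> \<le> \<alpha> * (\<alpha> * cc x ^ 3 * (norm g)^2)"
    proof -
      have "cc x ^2 \<le> cc x ^3" using cc_ge1[OF that] by (intro power_increasing) auto
      then have "\<alpha>^2 * (norm g)^2 * cc x^2 \<le> \<alpha>^2 * (norm g)^2 * cc x^3" by (intro mult_left_mono) auto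
      then show ?thesis by (simp add: power2_eq_square power3_eq_cube algebra_simps)
    qed
    also have "\<dots> = \<alpha> * H x" unfolding H_def f_def g_def detT[OF that] by simp
    finally show ?thesis .
  qed
  have normT: "norm (T x) = b * (b / norm x) powr \<alpha>" if "x \<noteq> 0" for x
  proof -
    have n: "norm x > 0" using that by simp
    have "norm (T x) = (b / norm x) powr (\<alpha> + 1) * norm x" unfolding T_def \<beta>_def by simp
    also have "\<dots> = (b / norm x) powr \<alpha> * (b / norm x) * norm x" using n assms(1) by (simp add: powr_add)
    also have "\<dots> = b * (b / norm x) powr \<alpha>" using n by simp
    finally show ?thesis .
  qed
  have TnotB: "T x \<notin> ball 0 b" if "x \<in> S" for x
  proof -
    have x0: "x \<noteq> 0" and "norm x < b" using that by (auto simp: S_def)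
    then have "b / norm x \<ge> 1" by simp
    then have "(b / norm x) powr \<alpha> \<ge> 1" using assms(2) by (intro ge_one_powr_ge_zero) auto
    then have "b * (b / norm x) powr \<alpha> \<ge> b" using assms(1) by simp
    then show ?thesis using normT[OF x0] by simp
  qed
  have inj: "inj_on T S"
  proof (rule inj_onI)
    fix x y assume xS: "x \<in> S" and yS: "y \<in> S" and e: "T x = T y"
    have x0: "x \<noteq> 0" and y0: "y \<noteq> 0" using xS yS by (auto simp: S_def)
    have "b * (b / norm x) powr \<alpha> = b * (b / norm y) powr \<alpha>" using normT[OF x0] normT[OF y0] e by metis
    then have p: "(b / norm x) powr \<alpha> = (b / norm y) powr \<alpha>" using assms(1) by simp
    have "b / norm x = b / norm y"
    proof (rule ccontr)
      assume "b / norm x \<noteq> b / norm y"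
      then consider "b / norm x < b / norm y" | "b / norm y < b / norm x" by linarith
      then show False
      proof cases
        case 1 then have "(b / norm x) powr \<alpha> < (b / norm y) powr \<alpha>" using assms by (intro powr_less_mono2) auto
        then show False using p by simp
      next
        case 2 then have "(b / norm y) powr \<alpha> < (b / norm x) powr \<alpha>" using assms by (intro powr_less_mono2) auto
        then show False using p by simp
      qed
    qed
    then have "cc x = cc y" unfolding cc_def by (rule arg_cong)
    moreover have "cc x > 0" using cc_ge1[OF xS] by simp
    moreover have "cc x *\<^sub>R x = cc y *\<^sub>R y" using e by (simp add: T_def cc_def)
    ultimately show "x = y" by simp
  qed
  have Sleb: "S \<in> sets lebesgue"
  proof -
    have "open S" unfolding S_def by (intro open_Diff) auto
    moreover have "bounded S" unfolding S_def by (rule bounded_subset[of "ball 0 b"]) auto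
    ultimately have "S \<in> lmeasurable" by (rule lmeasurable_open[rotated])
    then show ?thesis by (rule fmeasurableD)
  qed
  define K where "K = closure {x. u x \<noteq> 0}"
  have f0: "f y = 0" if "y \<notin> K" for y
  proof -
    have oK: "open (- K)" unfolding K_def by auto
    have "((\<lambda>_. 0::real) has_derivative (\<lambda>h. 0)) (at y)" by simp
    then have "(u has_derivative (\<lambda>h. 0)) (at y)"
      by (rule has_derivative_transform_within_open[OF _ oK])
         (use that closure_subset[of "{x. u x \<noteq> 0}"] in \<open>auto simp: K_def\<close>)
    then have "GDERIV u y :> 0" unfolding gderiv_def by simp
    then show ?thesis by (simp add: grad_eq f_def)
  qed
  have fcont: "continuous_on UNIV f" unfolding f_def using assms(4) by (auto intro!: continuous_intros)
  have "bounded K" using assms(5) compact_imp_bounded unfolding K_def by blast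
  then obtain a where a: "K \<subseteq> cbox (-a) a" by (rule bounded_subset_cbox_symmetric)
  have "f integrable_on cbox (-a) a"
    by (rule integrable_continuous) (rule continuous_on_subset[OF fcont], simp)
  then have fint: "f integrable_on UNIV" by (rule integrable_on_superset) (use a f0 in auto)
  have fabs: "f absolutely_integrable_on UNIV"
    by (rule nonnegative_absolutely_integrable_1[OF fint]) (simp add: f_def)
  have der: "(T has_derivative T' x) (at x within S)" if "x \<in> S" for x
  proof -
    have "x \<noteq> 0" using that by (auto simp: S_def)
    then show ?thesis using Tder has_derivative_at_withinI by blast
  qed
  have Tdiff: "T differentiable_on S" unfolding differentiable_on_def differentiable_def using der by blast
  have TS: "T ` S \<in> sets lebesgue"
    by (rule differentiable_image_in_sets_lebesgue[OF Sleb _ Tdiff]) simp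
  have fTS: "f absolutely_integrable_on T ` S" by (rule set_integrable_subset[OF fabs TS]) simp
  define I where "I = integral (T ` S) f"
  have "f integrable_on T ` S" using fTS unfolding absolutely_integrable_on_def by (rule conjunct1)
  then have fI: "(f has_integral I) (T ` S)" unfolding I_def by (rule integrable_integral)
  define F where "F = (\<lambda>y. vec (f y) :: real^1)"
  have blvec: "bounded_linear (vec :: real \<Rightarrow> real^1)" by (rule linear_conv_bounded_linear[THEN iffD1]) simp
  have FTS: "F absolutely_integrable_on T ` S" unfolding F_def
    using absolutely_integrable_linear[OF fTS blvec] by (simp add: o_def)
  have FI: "(F has_integral vec I) (T ` S)" unfolding F_def
    using has_integral_linear[OF fI blvec] by (simp add: o_def)
  have "(\<lambda>x. \<bar>det (matrix (T' x))\<bar> *\<^sub>R F (T x)) absolutely_integrable_on S \<and>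
        integral S (\<lambda>x. \<bar>det (matrix (T' x))\<bar> *\<^sub>R F (T x)) = vec I"
    by (rule has_absolute_integral_change_of_variables[OF Sleb der inj, of F "vec I", THEN iffD2])
       (use FTS integral_unique[OF FI] in auto)
  then have Fint: "(\<lambda>x. \<bar>det (matrix (T' x))\<bar> *\<^sub>R F (T x)) integrable_on S"
    and ie: "integral S (\<lambda>x. \<bar>det (matrix (T' x))\<bar> *\<^sub>R F (T x)) = vec I"
    unfolding absolutely_integrable_on_def by auto
  have "((\<lambda>x. \<bar>det (matrix (T' x))\<bar> *\<^sub>R F (T x)) has_integral vec I) S"
    using integrable_integral[OF Fint] unfolding ie by simp
  then have "((\<lambda>v::real^1. v $ 1) \<circ> (\<lambda>x. \<bar>det (matrix (T' x))\<bar> *\<^sub>R F (T x)) has_integral (vec I :: real^1) $ 1) S"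
    by (rule has_integral_linear[OF _ bounded_linear_vec_nth])
  then have HI: "(H has_integral I) S" by (simp add: o_def H_def F_def)
  have "(\<integral>\<^sup>+ x \<in> ball 0 b. ennreal ((norm (grad (u_alpha b \<alpha> u) x))\<^sup>2) \<partial>lborel)
      = (\<integral>\<^sup>+ x \<in> S. ennreal ((norm (grad (u_alpha b \<alpha> u) x))\<^sup>2) \<partial>lborel)"
    by (intro nn_integral_cong_AE eventually_mono[OF AE_lborel_singleton[of 0]]) (auto simp: S_def indicator_def)
  also have "\<dots> \<le> (\<integral>\<^sup>+ x \<in> S. ennreal (\<alpha> * H x) \<partial>lborel)"
    by (intro nn_integral_mono) (auto simp: indicator_def intro!: ennreal_leI pw)
  also have "\<dots> = ennreal (\<alpha> * I)"
    by (rule nn_integral_has_integral_lebesgue') (use assms(2) HI in \<open>auto intro: has_integral_mult_right simp: H_def f_def\<close>)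
  also have "\<dots> = ennreal \<alpha> * ennreal I" using assms(2) by (simp add: ennreal_mult')
  also have "\<dots> \<le> ennreal \<alpha> * (\<integral>\<^sup>+ x \<in> - ball 0 b. ennreal (f x) \<partial>lborel)"
  proof (rule mult_left_mono)
    have "ennreal I = (\<integral>\<^sup>+ x \<in> T ` S. ennreal (f x) \<partial>lborel)"
      by (rule nn_integral_has_integral_lebesgue'[symmetric]) (simp add: f_def, fact fI)
    also have "\<dots> \<le> (\<integral>\<^sup>+ x \<in> - ball 0 b. ennreal (f x) \<partial>lborel)"
      using TnotB by (intro nn_integral_mono) (auto simp: indicator_def)
    finally show "ennreal I \<le> (\<integral>\<^sup>+ x \<in> - ball 0 b. ennreal (f x) \<partial>lborel)" .
  qed simp
  finally show ?thesis unfolding f_def .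
qed
end
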